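(* For all integers $B\ge2$ and $n\ge0$, $P_n(1,B)=(-1)^{n+1}p_n(1,B)$, where $$P_n(1,B)=\sum_{j=0}^{n}\binom nj\binom{n+j}n^{B}\binom{2n-j}n^{B}\Big[\Big(\frac n2-j\Big)\big((1+B)(H_{n-j}-H_j)+B(H_{n+j}-H_{2n-j})\big)-1\Big]$$ and $$p_n(1,B)=\sum_{0\le i_1\le\dots\le i_{B-1}\le n}(-1)^{i_{B-1}+i_{B-2}}\binom{3n+1}{n-i_{B-1}}\binom{n+i_{B-1}-i_{B-2}}{n}\binom{n+i_{B-1}}n\prod_{k=1}^{B-2}\binom n{i_k-i_{k-1}}\binom{2n-i_k}n\binom{n+i_k}n,$$ with $i_0=0$.
   Context: $H_m=\sum_{j=1}^m1/j$, $H_0=0$. Empty products equal $1$. *)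

theory Defs
  imports "HOL-Analysis.Analysis"
begin

text \<open>H_m is the library's harmonic number harm m (sum of 1/k for k = 1..m; harm 0 = 0).\<close>

definition bigP :: "nat \<Rightarrow> nat \<Rightarrow> real" where
  "bigP n B = (\<Sum>j = 0..n. real (n choose j) * real ((n + j) choose n) ^ B
      * real ((2*n - j) choose n) ^ B
      * ((real n / 2 - real j) * ((1 + real B) * (harm (n - j) - harm j)
            + real B * (harm (n + j) - harm (2*n - j))) - 1))"

text \<open>Index tuples (i_0, i_1, ..., i_{B-1}) with i_0 = 0 and
  0 <= i_1 <= ... <= i_{B-1} <= n, encoded as functions nat => nat that vanish
  outside {0..B-1}.\<close>
definition idx_tuples :: "nat \<Rightarrow> nat \<Rightarrow> (nat \<Rightarrow> nat) set" where
  "idx_tuples n B = {i. i 0 = 0 \<and> (\<forall>k\<in>{1..B-1}. i (k - 1) \<le> i k)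
      \<and> i (B - 1) \<le> n \<and> (\<forall>k\<ge>B. i k = 0)}"

definition smallp :: "nat \<Rightarrow> nat \<Rightarrow> int" where
  "smallp n B = (\<Sum>i\<in>idx_tuples n B.
      (-1) ^ (i (B - 1) + i (B - 2))
      * int ((3*n + 1) choose (n - i (B - 1)))
      * int ((n + i (B - 1) - i (B - 2)) choose n)
      * int ((n + i (B - 1)) choose n)
      * (\<Prod>k = 1..B - 2. int (n choose (i k - i (k - 1)))
            * int ((2*n - i k) choose n) * int ((n + i k) choose n)))"

end

theory Submission imports Defs "HOL-Computational_Algebra.Formal_Power_Series" "HOL-Computational_Algebra.Polynomial"
begin


lemma negchoose: "real ((m + t) choose m) = (-1) ^ t * ((- (real m + 1)) gchoose t)"
proof -
  have "((- (real m + 1)) gchoose t) = (-1) ^ t * ((real t - (- (real m + 1)) - 1) gchoose t)"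
    by (rule gbinomial_negated_upper)
  also have "real t - (- (real m + 1)) - 1 = real (m + t)" by simp
  also have "(real (m + t) gchoose t) = real ((m + t) choose t)" by (simp add: binomial_gbinomial)
  also have "((m + t) choose t) = ((m + t) choose m)"
    using binomial_symmetric[of t "m+t"] by simp
  finally have "((- (real m + 1)) gchoose t) = (-1) ^ t * real ((m + t) choose m)" .
  then have "(-1) ^ t * ((- (real m + 1)) gchoose t) = ((-1) ^ t * (-1) ^ t) * real ((m + t) choose m)"
    by simp
  also have "((-1::real) ^ t * (-1) ^ t) = 1" by (simp add: power_mult_distrib[symmetric])
  finally show ?thesis by simp
qed

lemma altG: "(\<Sum>s=0..r. (-1) ^ s * real (N choose s) * real ((m + (r - s)) choose m))
   = (-1) ^ r * ((real N - real m - 1) gchoose r)"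
proof -
  have "(\<Sum>s=0..r. (-1) ^ s * real (N choose s) * real ((m + (r - s)) choose m))
     = (\<Sum>s=0..r. (-1) ^ r * ((real N gchoose s) * ((- (real m + 1)) gchoose (r - s))))"
  proof (rule sum.cong[OF refl])
    fix s assume "s \<in> {0..r}"
    then have sr: "s \<le> r" by simp
    have pw: "(-1::real) ^ s * (-1) ^ (r - s) = (-1) ^ r"
      using sr by (simp add: power_add[symmetric])
    have "(-1) ^ s * real (N choose s) * real ((m + (r - s)) choose m)
       = (-1) ^ s * (real N gchoose s) * ((-1) ^ (r - s) * ((- (real m + 1)) gchoose (r - s)))"
      unfolding negchoose[of m "r - s"] by (simp only: binomial_gbinomial)
    also have "\<dots> = ((-1) ^ s * (-1) ^ (r - s)) * ((real N gchoose s) * ((- (real m + 1)) gchoose (r - s)))"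
      by (simp only: mult_ac)
    finally show "(-1) ^ s * real (N choose s) * real ((m + (r - s)) choose m) =
      (-1) ^ r * ((real N gchoose s) * ((- (real m + 1)) gchoose (r - s)))"
      by (simp only: pw)
  qed
  also have "\<dots> = (-1) ^ r * (\<Sum>s=0..r. (real N gchoose s) * ((- (real m + 1)) gchoose (r - s)))"
    by (simp add: sum_distrib_left)
  also have "\<dots> = (-1) ^ r * ((real N + (- (real m + 1))) gchoose r)"
    by (simp only: gbinomial_Vandermonde)
  also have "real N + (- (real m + 1)) = real N - real m - 1" by simp
  finally show ?thesis .
qed



lemma gchoose_neg1: "((-1::real) gchoose k) = (-1) ^ k"
proof -
  have "((-1::real) gchoose k) = (-1) ^ k * ((real k - (-1) - 1) gchoose k)"
    by (rule gbinomial_negated_upper)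
  also have "real k - (-1) - 1 = real k" by simp
  also have "(real k gchoose k) = 1" by (simp add: binomial_gbinomial[symmetric])
  finally show ?thesis by simp
qed

lemma sign_split: "s \<le> r \<Longrightarrow> (-1::real) ^ (r - s) = (-1) ^ r * (-1) ^ s"
proof -
  assume "s \<le> r"
  then have "(-1::real) ^ r = (-1) ^ (r - s) * (-1) ^ s" by (simp add: power_add[symmetric])
  then have "(-1::real) ^ r * (-1) ^ s = (-1) ^ (r - s) * ((-1) ^ s * (-1) ^ s)" by simp
  also have "((-1::real) ^ s * (-1) ^ s) = 1" by (simp add: power_mult_distrib[symmetric])
  finally show ?thesis by simp
qed

lemma L3core: "b \<le> n \<Longrightarrow>
  (\<Sum>c=b..n. real (n choose (c - b)) * ((-1) ^ (n + c) * real ((2*n - c) choose n))) = (-1) ^ (n + b)"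
proof -
  assume bn: "b \<le> n"
  have "(\<Sum>c=b..n. real (n choose (c - b)) * ((-1) ^ (n + c) * real ((2*n - c) choose n)))
      = (\<Sum>k=0..n-b. real (n choose k) * ((-1) ^ (n + (k + b)) * real ((2*n - (k + b)) choose n)))"
    using sum.shift_bounds_cl_nat_ivl[of "\<lambda>c. real (n choose (c - b)) * ((-1) ^ (n + c) * real ((2*n - c) choose n))" 0 b "n-b"] bn
    by simp
  also have "\<dots> = (\<Sum>k=0..n-b. (-1) ^ (n + b) * ((-1) ^ k * real (n choose k) * real ((n + ((n - b) - k)) choose n)))"
  proof (rule sum.cong[OF refl])
    fix k assume "k \<in> {0..n-b}"
    then have kb: "k \<le> n - b" by simp
    have e1: "2*n - (k + b) = n + ((n - b) - k)" using kb bn by simp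
    have e2: "(-1::real) ^ (n + (k + b)) = (-1) ^ (n + b) * (-1) ^ k" by (simp add: power_add)
    show "real (n choose k) * ((-1) ^ (n + (k + b)) * real ((2*n - (k + b)) choose n)) =
       (-1) ^ (n + b) * ((-1) ^ k * real (n choose k) * real ((n + ((n - b) - k)) choose n))"
      unfolding e1 e2 by (simp only: mult_ac)
  qed
  also have "\<dots> = (-1) ^ (n + b) * (\<Sum>k=0..n-b. (-1) ^ k * real (n choose k) * real ((n + ((n - b) - k)) choose n))"
    by (simp add: sum_distrib_left)
  also have "(\<Sum>k=0..n-b. (-1) ^ k * real (n choose k) * real ((n + ((n - b) - k)) choose n)) = (-1) ^ (n - b) * ((real n - real n - 1) gchoose (n - b))"
    by (rule altG)
  also have "(real n - real n - 1) = (-1::real)" by simp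
  also have "(-1) ^ (n - b) * ((-1::real) gchoose (n - b)) = 1"
    by (simp add: gchoose_neg1 power_mult_distrib[symmetric])
  finally show ?thesis by simp
qed

lemma L4inner: "(\<Sum>t=0..r. (-1) ^ t * real ((n + t) choose n) * real ((2*n+1) choose (r - t))) = real (n choose r)"
proof -
  have "(\<Sum>t=0..r. (-1) ^ t * real ((n + t) choose n) * real ((2*n+1) choose (r - t)))
     = (\<Sum>t=0..r. (-1) ^ (r + 0 - t) * real ((n + (r + 0 - t)) choose n) * real ((2*n+1) choose (r - (r + 0 - t))))"
    by (rule sum.atLeastAtMost_rev)
  also have "\<dots> = (\<Sum>s=0..r. (-1) ^ r * ((-1) ^ s * real ((2*n+1) choose s) * real ((n + (r - s)) choose n)))"
  proof (rule sum.cong[OF refl])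
    fix s assume "s \<in> {0..r}"
    then have sr: "s \<le> r" by simp
    have e: "r - (r + 0 - s) = s" using sr by simp
    show "(-1) ^ (r + 0 - s) * real ((n + (r + 0 - s)) choose n) * real ((2*n+1) choose (r - (r + 0 - s)))
       = (-1) ^ r * ((-1) ^ s * real ((2*n+1) choose s) * real ((n + (r - s)) choose n))"
      unfolding e using sign_split[OF sr] by simp
  qed
  also have "\<dots> = (-1) ^ r * (\<Sum>s=0..r. (-1) ^ s * real ((2*n+1) choose s) * real ((n + (r - s)) choose n))"
    by (simp add: sum_distrib_left)
  also have "(\<Sum>s=0..r. (-1) ^ s * real ((2*n+1) choose s) * real ((n + (r - s)) choose n))
      = (-1) ^ r * ((real (2*n+1) - real n - 1) gchoose r)"
    by (rule altG)
  also have "real (2*n+1) - real n - 1 = real n" by simp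
  finally show ?thesis
    by (simp add: binomial_gbinomial power_mult_distrib[symmetric] mult.assoc[symmetric])
qed



lemma step3nat: "a \<le> n \<Longrightarrow>
  (\<Sum>i\<le>n. ((n+a) choose i) * ((2*n+1) choose (n - i)) * (i choose a)) = ((n+a) choose n) * ((3*n+1) choose (n - a))"
proof -
  assume an: "a \<le> n"
  have "(\<Sum>i\<le>n. ((n+a) choose i) * ((2*n+1) choose (n - i)) * (i choose a))
      = (\<Sum>i\<in>{a..n}. ((n+a) choose i) * ((2*n+1) choose (n - i)) * (i choose a))"
    by (rule sum.mono_neutral_right) auto
  also have "\<dots> = (\<Sum>i\<in>{a..n}. ((n+a) choose a) * ((n choose (i - a)) * ((2*n+1) choose (n - i))))"
  proof (rule sum.cong[OF refl])
    fix i assume "i \<in> {a..n}"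
    then have ai: "a \<le> i" "i \<le> n" by auto
    have "((n+a) choose i) * (i choose a) = ((n+a) choose a) * ((n + a - a) choose (i - a))"
      by (rule choose_mult) (use ai in auto)
    then show "((n+a) choose i) * ((2*n+1) choose (n - i)) * (i choose a)
       = ((n+a) choose a) * ((n choose (i - a)) * ((2*n+1) choose (n - i)))"
      by (simp add: mult_ac)
  qed
  also have "\<dots> = ((n+a) choose a) * (\<Sum>i\<in>{a..n}. (n choose (i - a)) * ((2*n+1) choose (n - i)))"
    by (simp add: sum_distrib_left)
  also have "(\<Sum>i\<in>{a..n}. (n choose (i - a)) * ((2*n+1) choose (n - i)))
       = (\<Sum>t=0..n-a. (n choose t) * ((2*n+1) choose ((n - a) - t)))"
    using sum.shift_bounds_cl_nat_ivl[of "\<lambda>i. (n choose (i - a)) * ((2*n+1) choose (n - i))" 0 a "n-a"] an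
    by (simp add: add.commute)
  also have "\<dots> = (\<Sum>t\<le>n-a. (n choose t) * ((2*n+1) choose ((n - a) - t)))"
    by (simp add: atLeast0AtMost)
  also have "\<dots> = (n + (2*n+1)) choose (n - a)" by (rule vandermonde)
  also have "((n+a) choose a) = ((n+a) choose n)"
    using binomial_symmetric[of a "n+a"] by simp
  finally show ?thesis by (simp add: add.commute)
qed

lemma step2: "a \<le> n \<Longrightarrow> i \<le> n \<Longrightarrow>
  (\<Sum>k=0..n-a. (-1) ^ (n + (k + a)) * real ((2*n+1) choose k) * real (k choose (n - i)) * real ((2*n - (k + a)) choose n))
   = real ((2*n+1) choose (n - i)) * real (i choose a)"
proof -
  assume an: "a \<le> n" and iN: "i \<le> n"
  let ?f = "\<lambda>k. (-1) ^ (n + (k + a)) * real ((2*n+1) choose k) * real (k choose (n - i)) * real ((2*n - (k + a)) choose n)"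
  show ?thesis
  proof (cases "i < a")
    case True
    have "(\<Sum>k=0..n-a. ?f k) = 0"
    proof (rule sum.neutral, rule ballI)
      fix k assume "k \<in> {0..n-a}"
      then have "k < n - i" using True an iN by auto
      then show "?f k = 0" by simp
    qed
    then show ?thesis using True by simp
  next
    case False
    then have ai: "a \<le> i" by simp
    have "(\<Sum>k=0..n-a. ?f k) = (\<Sum>k=n-i..n-a. ?f k)"
      by (rule sum.mono_neutral_right) auto
    also have "\<dots> = (\<Sum>s=0..i-a. ?f (s + (n - i)))"
      using sum.shift_bounds_cl_nat_ivl[of ?f 0 "n-i" "i-a"] ai iN by simp
    also have "\<dots> = (\<Sum>s=0..i-a. real ((2*n+1) choose (n - i)) * (-1) ^ (i - a) *
                       ((-1) ^ s * real ((n+1+i) choose s) * real ((n + ((i - a) - s)) choose n)))"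
    proof (rule sum.cong[OF refl])
      fix s assume "s \<in> {0..i-a}"
      then have s: "s \<le> i - a" by simp
      have cm: "((2*n+1) choose (s + (n - i))) * ((s + (n - i)) choose (n - i))
              = ((2*n+1) choose (n - i)) * (((2*n+1) - (n - i)) choose (s + (n - i) - (n - i)))"
        by (rule choose_mult) (use s ai iN in auto)
      have e1: "(2*n+1) - (n - i) = n+1+i" using iN by simp
      have e2: "s + (n - i) - (n - i) = s" by simp
      have cm': "real ((2*n+1) choose (s + (n - i))) * real ((s + (n - i)) choose (n - i))
              = real ((2*n+1) choose (n - i)) * real ((n+1+i) choose s)"
        using cm unfolding e1 e2 by (metis of_nat_mult)
      have e3: "2*n - (s + (n - i) + a) = n + ((i - a) - s)" using s ai iN by simp
      have e4: "n + (s + (n - i) + a) = ((i - a) + s) + 2 * (n - i + a)" using s ai iN by simp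
      have sg: "(-1::real) ^ (n + (s + (n - i) + a)) = (-1) ^ (i - a) * (-1) ^ s"
        unfolding e4 by (simp add: power_add power_mult)
      show "?f (s + (n - i)) = real ((2*n+1) choose (n - i)) * (-1) ^ (i - a) *
                       ((-1) ^ s * real ((n+1+i) choose s) * real ((n + ((i - a) - s)) choose n))"
        unfolding e3 sg
        using cm' by (simp add: mult_ac)
    qed
    also have "\<dots> = real ((2*n+1) choose (n - i)) * (-1) ^ (i - a) *
          (\<Sum>s=0..i-a. (-1) ^ s * real ((n+1+i) choose s) * real ((n + ((i - a) - s)) choose n))"
      by (simp add: sum_distrib_left)
    also have "(\<Sum>s=0..i-a. (-1) ^ s * real ((n+1+i) choose s) * real ((n + ((i - a) - s)) choose n))
        = (-1) ^ (i - a) * ((real (n+1+i) - real n - 1) gchoose (i - a))"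
      by (rule altG)
    also have "real (n+1+i) - real n - 1 = real i" by simp
    also have "(real i gchoose (i - a)) = real (i choose (i - a))" by (simp add: binomial_gbinomial)
    also have "(i choose (i - a)) = (i choose a)" using binomial_symmetric[OF ai] by simp
    finally show ?thesis
      by (simp add: mult.assoc[symmetric] power_mult_distrib[symmetric])
  qed
qed



lemma tri_swap: fixes b n :: nat shows "(\<Sum>c=b..n. \<Sum>a=b..c. g a c) = (\<Sum>a=b..n. \<Sum>c=a..n. (g a c :: real))"
proof -
  have "(\<Sum>c=b..n. \<Sum>a=b..c. g a c) = (\<Sum>c=b..n. \<Sum>a=b..n. if a \<le> c then g a c else 0)"
  proof (rule sum.cong[OF refl])
    fix c assume c: "c \<in> {b..n}"
    show "(\<Sum>a=b..c. g a c) = (\<Sum>a=b..n. if a \<le> c then g a c else 0)"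
      by (rule sum.mono_neutral_cong_left) (use c in auto)
  qed
  also have "\<dots> = (\<Sum>a=b..n. \<Sum>c=b..n. if a \<le> c then g a c else 0)" by (rule sum.swap)
  also have "\<dots> = (\<Sum>a=b..n. \<Sum>c=a..n. g a c)"
  proof (rule sum.cong[OF refl])
    fix a assume a: "a \<in> {b..n}"
    show "(\<Sum>c=b..n. if a \<le> c then g a c else 0) = (\<Sum>c=a..n. g a c)"
      by (rule sum.mono_neutral_cong_right) (use a in auto)
  qed
  finally show ?thesis .
qed

definition Qr :: "nat \<Rightarrow> nat \<Rightarrow> real" where
  "Qr n c = real ((n + c) choose n) * real ((2*n - c) choose n)"

definition Kr :: "nat \<Rightarrow> nat \<Rightarrow> real" where
  "Kr n b = (\<Sum>a=b..n. (-1) ^ (a + b) * real ((3*n + 1) choose (n - a))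
      * real ((n + a - b) choose n) * real ((n + a) choose n))"

lemma aprime: "a \<le> n \<Longrightarrow>
  (\<Sum>c=a..n. (-1) ^ (n + c) * real ((2*n+1) choose (c - a)) * Qr n c)
   = real ((n+a) choose n) * real ((3*n+1) choose (n - a))"
proof -
  assume an: "a \<le> n"
  have "(\<Sum>c=a..n. (-1) ^ (n + c) * real ((2*n+1) choose (c - a)) * Qr n c)
     = (\<Sum>k=0..n-a. (-1) ^ (n + (k + a)) * real ((2*n+1) choose k) * real ((n + (k + a)) choose n) * real ((2*n - (k + a)) choose n))"
    using sum.shift_bounds_cl_nat_ivl[of "\<lambda>c. (-1) ^ (n + c) * real ((2*n+1) choose (c - a)) * Qr n c" 0 a "n-a"] an
    by (simp add: Qr_def mult.assoc)
  also have "\<dots> = (\<Sum>k=0..n-a. \<Sum>i\<le>n. real ((n+a) choose i) *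
        ((-1) ^ (n + (k + a)) * real ((2*n+1) choose k) * real (k choose (n - i)) * real ((2*n - (k + a)) choose n)))"
  proof (rule sum.cong[OF refl])
    fix k assume "k \<in> {0..n-a}"
    have v: "real ((n + (k + a)) choose n) = (\<Sum>i\<le>n. real ((n+a) choose i) * real (k choose (n - i)))"
    proof -
      have v0: "(\<Sum>i\<le>n. ((n+a) choose i) * (k choose (n - i))) = (n + (k + a)) choose n"
        using vandermonde[where r=n and m="n+a" and n=k] by (simp add: add_ac)
      show ?thesis unfolding v0[symmetric] by simp
    qed
    show "(-1) ^ (n + (k + a)) * real ((2*n+1) choose k) * real ((n + (k + a)) choose n) * real ((2*n - (k + a)) choose n)
       = (\<Sum>i\<le>n. real ((n+a) choose i) *
        ((-1) ^ (n + (k + a)) * real ((2*n+1) choose k) * real (k choose (n - i)) * real ((2*n - (k + a)) choose n)))"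
      unfolding v by (simp add: sum_distrib_left sum_distrib_right mult_ac)
  qed
  also have "\<dots> = (\<Sum>i\<le>n. \<Sum>k=0..n-a. real ((n+a) choose i) *
        ((-1) ^ (n + (k + a)) * real ((2*n+1) choose k) * real (k choose (n - i)) * real ((2*n - (k + a)) choose n)))"
    by (rule sum.swap)
  also have "\<dots> = (\<Sum>i\<le>n. real ((n+a) choose i) * (real ((2*n+1) choose (n - i)) * real (i choose a)))"
  proof (rule sum.cong[OF refl])
    fix i assume "i \<in> {..n}"
    then have iN: "i \<le> n" by simp
    show "(\<Sum>k=0..n-a. real ((n+a) choose i) *
        ((-1) ^ (n + (k + a)) * real ((2*n+1) choose k) * real (k choose (n - i)) * real ((2*n - (k + a)) choose n)))
      = real ((n+a) choose i) * (real ((2*n+1) choose (n - i)) * real (i choose a))"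
      using step2[OF an iN] by (simp add: sum_distrib_left[symmetric])
  qed
  also have "\<dots> = real (\<Sum>i\<le>n. ((n+a) choose i) * ((2*n+1) choose (n - i)) * (i choose a))"
    by (simp add: mult.assoc)
  also have "\<dots> = real (((n+a) choose n) * ((3*n+1) choose (n - a)))"
    using step3nat[OF an] by simp
  finally show ?thesis by simp
qed

lemma L4: "b \<le> n \<Longrightarrow>
  (\<Sum>c=b..n. real (n choose (c - b)) * Qr n c * (-1) ^ (n + c)) = Kr n b"
proof -
  assume bn: "b \<le> n"
  have inner: "real (n choose (c - b)) = (\<Sum>a=b..c. (-1) ^ (a - b) * real ((n + (a - b)) choose n) * real ((2*n+1) choose (c - a)))"
    if bc: "b \<le> c" for c
  proof -
    have "(\<Sum>a=b..c. (-1) ^ (a - b) * real ((n + (a - b)) choose n) * real ((2*n+1) choose (c - a)))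
       = (\<Sum>t=0..c-b. (-1) ^ t * real ((n + t) choose n) * real ((2*n+1) choose ((c - b) - t)))"
      using sum.shift_bounds_cl_nat_ivl[of "\<lambda>a. (-1) ^ (a - b) * real ((n + (a - b)) choose n) * real ((2*n+1) choose (c - a))" 0 b "c-b"] bc
      by (simp add: add.commute)
    also have "\<dots> = real (n choose (c - b))" by (rule L4inner)
    finally show ?thesis by simp
  qed
  have "(\<Sum>c=b..n. real (n choose (c - b)) * Qr n c * (-1) ^ (n + c))
     = (\<Sum>c=b..n. \<Sum>a=b..c. (-1) ^ (a - b) * real ((n + (a - b)) choose n) * ((-1) ^ (n + c) * real ((2*n+1) choose (c - a)) * Qr n c))"
  proof (rule sum.cong[OF refl])
    fix c assume "c \<in> {b..n}"
    then have "b \<le> c" by simp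
    then show "real (n choose (c - b)) * Qr n c * (-1) ^ (n + c) =
      (\<Sum>a=b..c. (-1) ^ (a - b) * real ((n + (a - b)) choose n) * ((-1) ^ (n + c) * real ((2*n+1) choose (c - a)) * Qr n c))"
      unfolding inner[OF \<open>b \<le> c\<close>] by (simp add: sum_distrib_left sum_distrib_right mult_ac)
  qed
  also have "\<dots> = (\<Sum>a=b..n. \<Sum>c=a..n. (-1) ^ (a - b) * real ((n + (a - b)) choose n) * ((-1) ^ (n + c) * real ((2*n+1) choose (c - a)) * Qr n c))"
    by (rule tri_swap)
  also have "\<dots> = (\<Sum>a=b..n. (-1) ^ (a - b) * real ((n + (a - b)) choose n) * (real ((n+a) choose n) * real ((3*n+1) choose (n - a))))"
  proof (rule sum.cong[OF refl])
    fix a assume "a \<in> {b..n}"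
    then have an: "a \<le> n" by simp
    show "(\<Sum>c=a..n. (-1) ^ (a - b) * real ((n + (a - b)) choose n) * ((-1) ^ (n + c) * real ((2*n+1) choose (c - a)) * Qr n c))
       = (-1) ^ (a - b) * real ((n + (a - b)) choose n) * (real ((n+a) choose n) * real ((3*n+1) choose (n - a)))"
      using aprime[OF an] by (simp add: sum_distrib_left[symmetric])
  qed
  also have "\<dots> = Kr n b"
    unfolding Kr_def
  proof (rule sum.cong[OF refl])
    fix a assume "a \<in> {b..n}"
    then have ba: "b \<le> a" by simp
    have s: "(-1::real) ^ (a - b) = (-1) ^ (a + b)"
    proof -
      have e: "a + b = (a - b) + 2 * b" using ba by simp
      have "(-1::real) ^ (a + b) = (-1) ^ (a - b) * (-1) ^ (2 * b)" unfolding e by (rule power_add)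
      also have "(-1::real) ^ (2 * b) = 1" by (simp add: power_mult)
      finally show ?thesis by simp
    qed
    have e: "n + (a - b) = n + a - b" using ba by simp
    show "(-1) ^ (a - b) * real ((n + (a - b)) choose n) * (real ((n+a) choose n) * real ((3*n+1) choose (n - a)))
       = (-1) ^ (a + b) * real ((3*n + 1) choose (n - a)) * real ((n + a - b) choose n) * real ((n + a) choose n)"
      unfolding s e by (simp add: mult_ac)
  qed
  finally show ?thesis .
qed



definition Lf :: "nat \<Rightarrow> real poly \<Rightarrow> real" where
  "Lf n N = (\<Sum>j\<le>n. real (n choose j) * (poly (pderiv N) (real j) + (harm (n - j) - harm j) * poly N (real j)))"

lemma Lf_add: "Lf n (p + q) = Lf n p + Lf n q"
  unfolding Lf_def sum.distrib[symmetric] by (rule sum.cong) (simp_all add: pderiv_add algebra_simps)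

lemma Lf_smult: "Lf n (smult c p) = c * Lf n p"
  unfolding Lf_def sum_distrib_left by (rule sum.cong) (simp_all add: pderiv_smult algebra_simps)

lemma Lf_zero: "Lf n 0 = 0"
  unfolding Lf_def by simp

lemma Lf_sum: "Lf n (\<Sum>k\<in>A. f k) = (\<Sum>k\<in>A. Lf n (f k))"
  by (induction A rule: infinite_finite_induct) (simp_all add: Lf_add Lf_zero)

lemma Lf_diff: "Lf n (p - q) = Lf n p - Lf n q"
  unfolding Lf_def sum_subtractf[symmetric] by (rule sum.cong) (simp_all add: pderiv_diff algebra_simps)

lemma Lf_vanish: "(\<And>j. j \<le> n \<Longrightarrow> poly N (real j) = 0 \<and> poly (pderiv N) (real j) = 0) \<Longrightarrow> Lf n N = 0"
  unfolding Lf_def by (intro sum.neutral) auto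

lemma binom_shift_real: "j < n \<Longrightarrow> real (n choose j) * (real n - real j) = real (n choose (Suc j)) * (real j + 1)"
proof -
  assume "j < n"
  have a: "(n - j) * (n choose j) = n * ((n - 1) choose j)" by (rule binomial_absorb_comp)
  have b: "Suc j * (n choose Suc j) = n * ((n - 1) choose j)" by (rule binomial_absorption)
  have "(n - j) * (n choose j) = Suc j * (n choose Suc j)" using a b by simp
  then have "real ((n - j) * (n choose j)) = real (Suc j * (n choose Suc j))" by simp
  then have "(real n - real j) * real (n choose j) = (real j + 1) * real (n choose Suc j)"
    using \<open>j < n\<close> by (simp only: of_nat_mult of_nat_diff less_imp_le of_nat_Suc) (simp add: add.commute)
  then show ?thesis by (simp add: mult.commute)
qed

lemma shift_term: "j < n \<Longrightarrow>
  real (n choose j) * (- y + (real n - real j) * d + (harm (n - j) - harm j) * ((real n - real j) * y))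
  = real (n choose Suc j) * (y + (real j + 1) * d + (harm (n - Suc j) - harm (Suc j)) * ((real j + 1) * y))"
proof -
  assume jn: "j < n"
  define c0 where "c0 = real (n choose j)"
  define c1 where "c1 = real (n choose Suc j)"
  have cc: "c0 * (real n - real j) = c1 * (real j + 1)" unfolding c0_def c1_def by (rule binom_shift_real[OF jn])
  have nj: "n - j = Suc (n - Suc j)" using jn by simp
  have h1: "harm (n - j) = harm (n - Suc j) + 1 / (real n - real j)"
    unfolding nj harm_Suc using jn by (simp add: of_nat_diff divide_inverse)
  have h2: "harm (Suc j) = harm j + 1 / (real j + 1)" by (simp add: harm_Suc divide_inverse add.commute)
  have pos1: "real n - real j \<noteq> 0" using jn by simp
  have pos2: "real j + 1 \<noteq> 0" by simp
  define H' :: real where "H' = harm (n - Suc j)"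
  define D where "D = real n - real j"
  define E where "E = real j + 1"
  have DE: "c0 * D = c1 * E" unfolding D_def E_def by (rule cc)
  have L: "c0 * (- y + D * d + (H' + 1 / D - harm j) * (D * y)) = c0 * D * (d + (H' - harm j) * y)"
  proof -
    have "(H' + 1 / D - harm j) * (D * y) = (H' - harm j) * (D * y) + (1 / D * D) * y" by (simp add: algebra_simps)
    also have "1 / D * D = 1" using pos1 unfolding D_def by simp
    finally show ?thesis by (simp add: algebra_simps)
  qed
  have R: "c1 * (y + E * d + (H' - (harm j + 1 / E)) * (E * y)) = c1 * E * (d + (H' - harm j) * y)"
  proof -
    have "(H' - (harm j + 1 / E)) * (E * y) = (H' - harm j) * (E * y) - (1 / E * E) * y" by (simp add: algebra_simps)
    also have "1 / E * E = 1" using pos2 unfolding E_def by simp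
    finally show ?thesis by (simp add: algebra_simps)
  qed
  show ?thesis
    unfolding c0_def[symmetric] c1_def[symmetric] h1 h2 H'_def[symmetric] D_def[symmetric] E_def[symmetric]
  proof -
    have "c0 * (- y + D * d + (H' + 1 / D - harm j) * (D * y)) = c0 * D * (d + (H' - harm j) * y)" by (rule L)
    also have "\<dots> = c1 * E * (d + (H' - harm j) * y)" using DE by simp
    also have "\<dots> = c1 * (y + E * d + (H' - (harm j + 1 / E)) * (E * y))" using R[symmetric] by simp
    finally show "c0 * (- y + D * d + (H' + 1 / D - harm j) * (D * y)) = c1 * (y + E * d + (H' - (harm j + 1 / E)) * (E * y))" .
  qed
qed

lemma Lf_shift: "Lf n ([:0, 1:] * N) - Lf n ([:real n, -1:] * pcompose N [:1, 1:]) = poly N 0 + poly N (real n + 1)"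
proof -
  define A where "A j = real (n choose j) * (poly (pderiv ([:0, 1:] * N)) (real j) + (harm (n - j) - harm j) * poly ([:0, 1:] * N) (real j))" for j
  define B where "B j = real (n choose j) * (poly (pderiv ([:real n, -1:] * pcompose N [:1, 1:])) (real j) + (harm (n - j) - harm j) * poly ([:real n, -1:] * pcompose N [:1, 1:]) (real j))" for j
  have pdB: "pderiv ([:real n, -1:] * pcompose N [:1, 1:]) = [:real n, -1:] * pcompose (pderiv N) [:1, 1:] - pcompose N [:1, 1:]"
    unfolding pderiv_mult pderiv_pcompose by (simp add: pderiv_pCons)
  have pdA: "pderiv ([:0, 1:] * N) = [:0, 1:] * pderiv N + N"
    by (simp add: pderiv_mult pderiv_pCons)
  have Bj: "B j = real (n choose j) * (- poly N (real j + 1) + (real n - real j) * poly (pderiv N) (real j + 1)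
      + (harm (n - j) - harm j) * ((real n - real j) * poly N (real j + 1)))" for j
    unfolding B_def pdB by (simp add: poly_pcompose algebra_simps)
  have Aj: "A j = real (n choose j) * (poly N (real j) + real j * poly (pderiv N) (real j)
      + (harm (n - j) - harm j) * (real j * poly N (real j)))" for j
    unfolding A_def pdA by (simp add: algebra_simps)
  have BA: "B j = A (Suc j)" if "j < n" for j
    unfolding Bj Aj using shift_term[OF that, of "poly N (real j + 1)" "poly (pderiv N) (real j + 1)"]
    by (simp add: add_ac)
  have Bn: "B n = - poly N (real n + 1)" unfolding Bj by simp
  have A0: "A 0 = poly N 0" unfolding Aj by simp
  have "Lf n ([:0, 1:] * N) = (\<Sum>j\<le>n. A j)" unfolding Lf_def A_def by simp
  also have "\<dots> = A 0 + (\<Sum>j<n. A (Suc j))" by (simp add: sum.atMost_shift)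
  finally have L1: "Lf n ([:0, 1:] * N) = A 0 + (\<Sum>j<n. A (Suc j))" .
  have "Lf n ([:real n, -1:] * pcompose N [:1, 1:]) = (\<Sum>j\<le>n. B j)" unfolding Lf_def B_def by simp
  also have "\<dots> = (\<Sum>j<n. B j) + B n" by (simp add: lessThan_Suc_atMost[symmetric])
  also have "(\<Sum>j<n. B j) = (\<Sum>j<n. A (Suc j))" by (rule sum.cong) (auto simp: BA)
  finally have L2: "Lf n ([:real n, -1:] * pcompose N [:1, 1:]) = (\<Sum>j<n. A (Suc j)) + B n" .
  show ?thesis unfolding L1 L2 A0 Bn by simp
qed



definition pib :: "nat \<Rightarrow> nat \<Rightarrow> real poly" where
  "pib n b = (\<Prod>i<b. [:- real i, 1:] * [:real i - real n, 1:])"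

definition lin2 :: "nat \<Rightarrow> real poly" where
  "lin2 n = [:- real n, 2:]"

lemma poly_pib: "poly (pib n b) x = (\<Prod>i<b. (x - real i) * (x - real n + real i))"
  unfolding pib_def by (simp add: poly_prod algebra_simps)

lemma prod_shift_fun: "x * (\<Prod>i<b. (x - (real i + 1))) = (\<Prod>i<b. (x - real i)) * (x - real b)"
proof -
  have "(\<Prod>i<Suc b. (x - real i)) = (x - real 0) * (\<Prod>i<b. (x - real (Suc i)))"
    by (rule prod.lessThan_Suc_shift)
  moreover have "(\<Prod>i<Suc b. (x - real i)) = (\<Prod>i<b. (x - real i)) * (x - real b)"
    by simp
  ultimately show ?thesis by (simp add: add.commute)
qed

lemma prod_shift_fun2: "(real n - x) * (\<Prod>i<b. (x + 1 - real n + real i)) = - ((\<Prod>i<b. (x - real n + real i)) * (x - real n + real b))"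
proof -
  have "(\<Prod>i<Suc b. (x - real n + real i)) = (x - real n + real 0) * (\<Prod>i<b. (x - real n + real (Suc i)))"
    by (rule prod.lessThan_Suc_shift)
  moreover have "(\<Prod>i<Suc b. (x - real n + real i)) = (\<Prod>i<b. (x - real n + real i)) * (x - real n + real b)"
    by simp
  moreover have "(\<Prod>i<b. (x - real n + real (Suc i))) = (\<Prod>i<b. (x + 1 - real n + real i))"
    by (rule prod.cong) (auto simp: algebra_simps)
  ultimately show ?thesis by (simp add: algebra_simps)
qed

definition Nb :: "nat \<Rightarrow> nat \<Rightarrow> real poly" where
  "Nb n b = (\<Prod>i<b. [:- (real i + 1), 1:]) * (\<Prod>i<b. [:real i - real n, 1:])"

lemma poly_Nb: "poly (Nb n b) x = (\<Prod>i<b. (x - (real i + 1))) * (\<Prod>i<b. (x - real n + real i))"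
  unfolding Nb_def by (simp add: poly_prod algebra_simps)

lemma lin2_pib_decomp: "lin2 n * pib n b = [:0, 1:] * Nb n b - [:real n, -1:] * pcompose (Nb n b) [:1, 1:]"
proof -
  have "poly (lin2 n * pib n b) x = poly ([:0, 1:] * Nb n b - [:real n, -1:] * pcompose (Nb n b) [:1, 1:]) x" for x
  proof -
    define A where "A = (\<Prod>i<b. (x - real i))"
    define R where "R = (\<Prod>i<b. (x - real n + real i))"
    have pA: "poly (pib n b) x = A * R" unfolding poly_pib A_def R_def by (simp add: prod.distrib)
    have p1: "poly ([:0, 1:] * Nb n b) x = A * (x - real b) * R"
    proof -
      have "poly ([:0, 1:] * Nb n b) x = x * poly (Nb n b) x" by simp
      also have "\<dots> = (x * (\<Prod>i<b. (x - (real i + 1)))) * R" unfolding poly_Nb R_def by (simp only: mult.assoc)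
      also have "\<dots> = A * (x - real b) * R" unfolding prod_shift_fun A_def by simp
      finally show ?thesis .
    qed
    have e: "(\<Prod>i<b. (x + 1 - (real i + 1))) = A" unfolding A_def by (rule prod.cong) auto
    have p2: "poly ([:real n, -1:] * pcompose (Nb n b) [:1, 1:]) x = - (A * (R * (x - real n + real b)))"
    proof -
      have "poly ([:real n, -1:] * pcompose (Nb n b) [:1, 1:]) x
          = (real n - x) * ((\<Prod>i<b. (x + 1 - (real i + 1))) * (\<Prod>i<b. (x + 1 - real n + real i)))"
        by (simp add: poly_pcompose poly_Nb algebra_simps)
      also have "\<dots> = A * ((real n - x) * (\<Prod>i<b. (x + 1 - real n + real i)))" unfolding e by simp
      also have "\<dots> = - (A * (R * (x - real n + real b)))" unfolding prod_shift_fun2 R_def by simp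
      finally show ?thesis .
    qed
    have l: "poly (lin2 n * pib n b) x = (2 * x - real n) * (A * R)"
      unfolding poly_mult pA lin2_def by simp
    have r: "poly ([:0, 1:] * Nb n b - [:real n, -1:] * pcompose (Nb n b) [:1, 1:]) x
        = A * (x - real b) * R - (- (A * (R * (x - real n + real b))))"
      by (simp only: poly_diff p1 p2)
    show ?thesis unfolding l r by (simp add: algebra_simps)
  qed
  then have "poly (lin2 n * pib n b) = poly ([:0, 1:] * Nb n b - [:real n, -1:] * pcompose (Nb n b) [:1, 1:])"
    by (rule ext)
  then show ?thesis by (rule poly_eq_poly_eq_iff[THEN iffD1])
qed

lemma prod_plus1_fact: "(\<Prod>i<b. (real i + 1)) = fact b"
  by (induction b) (simp_all add: prod.lessThan_Suc algebra_simps)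

lemma prod_neg1: "(\<Prod>i<b. (0 - (real i + 1))) = (-1) ^ b * fact b"
  by (induction b) (simp_all add: prod.lessThan_Suc algebra_simps)

lemma prod_neg2: "(\<Prod>i<b. (0 - real n + real i)) = (-1) ^ b * (\<Prod>i<b. (real n - real i))"
  by (induction b) (simp_all add: prod.lessThan_Suc algebra_simps)

lemma lambda_val: "Lf n (lin2 n * pib n b) = 2 * fact b * (\<Prod>i<b. (real n - real i))"
proof -
  have "Lf n (lin2 n * pib n b) = poly (Nb n b) 0 + poly (Nb n b) (real n + 1)"
    unfolding lin2_pib_decomp Lf_diff by (rule Lf_shift)
  also have "poly (Nb n b) 0 = ((-1) ^ b * fact b) * ((-1) ^ b * (\<Prod>i<b. (real n - real i)))"
    by (simp only: poly_Nb prod_neg1 prod_neg2)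
  also have "poly (Nb n b) (real n + 1) = fact b * (\<Prod>i<b. (real n - real i))"
  proof -
    have "poly (Nb n b) (real n + 1) = (\<Prod>i<b. (real n - real i)) * (\<Prod>i<b. (real i + 1))"
      unfolding poly_Nb by (simp add: algebra_simps)
    then show ?thesis by (simp add: prod_plus1_fact)
  qed
  finally show ?thesis
    by (simp add: algebra_simps power_mult_distrib[symmetric])
qed



lemma sq_dvd_vanish:
  fixes p :: "real poly"
  assumes "[:- a, 1:] ^ 2 dvd p"
  shows "poly p a = 0 \<and> poly (pderiv p) a = 0"
proof -
  obtain q where q: "p = [:- a, 1:] ^ 2 * q" using assms by (auto elim: dvdE)
  have sq: "pderiv ([:- a, 1:] ^ 2) = smult 2 [:- a, 1:]"
    by (simp add: power2_eq_square pderiv_mult pderiv_pCons algebra_simps)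
  have d: "pderiv p = [:- a, 1:] ^ 2 * pderiv q + q * (smult 2 [:- a, 1:])"
    unfolding q pderiv_mult sq by simp
  show ?thesis unfolding d by (simp add: q)
qed

lemma pib_dvd:
  assumes "n < c" "j \<le> n"
  shows "[:- real j, 1:] ^ 2 dvd pib n c"
proof -
  define F where "F i = [:- real i, 1:] * [:real i - real n, 1:]" for i
  have pib: "pib n c = (\<Prod>i<c. F i)" unfolding pib_def F_def by simp
  have jc: "j \<in> {..<c}" and njc: "n - j \<in> {..<c}" using assms by auto
  show ?thesis
  proof (cases "n - j = j")
    case True
    then have e: "real j - real n = - real j" using assms by linarith
    have Fj: "F j = [:- real j, 1:] ^ 2" unfolding F_def power2_eq_square e by simp
    have "pib n c = F j * (\<Prod>i\<in>{..<c} - {j}. F i)" unfolding pib using prod.remove[OF _ jc] by simp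
    then show ?thesis unfolding Fj by simp
  next
    case False
    have e2: "real (n - j) - real n = - real j" using assms by (simp add: of_nat_diff)
    have Fnj: "F (n - j) = [:- real (n - j), 1:] * [:- real j, 1:]"
      unfolding F_def e2 by (rule refl)
    have "pib n c = F j * (\<Prod>i\<in>{..<c} - {j}. F i)" unfolding pib using prod.remove[OF _ jc] by simp
    also have "(\<Prod>i\<in>{..<c} - {j}. F i) = F (n - j) * (\<Prod>i\<in>{..<c} - {j} - {n - j}. F i)"
      using prod.remove[of "{..<c} - {j}" "n - j" F] njc False by simp
    finally have "pib n c = F j * (F (n - j) * (\<Prod>i\<in>{..<c} - {j} - {n - j}. F i))" .
    also have "\<dots> = ([:- real j, 1:] ^ 2) * ([:real j - real n, 1:] * [:- real (n - j), 1:] * (\<Prod>i\<in>{..<c} - {j} - {n - j}. F i))"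
      unfolding Fnj unfolding F_def power2_eq_square by (simp only: mult_ac)
    finally show ?thesis by (metis dvd_triv_left)
  qed
qed

lemma Lf_pib_zero: "n < c \<Longrightarrow> Lf n (G * pib n c) = 0"
proof (rule Lf_vanish)
  fix j assume "n < c" "j \<le> n"
  have "[:- real j, 1:] ^ 2 dvd G * pib n c" using pib_dvd[OF \<open>n < c\<close> \<open>j \<le> n\<close>] by (rule dvd_mult)
  then show "poly (G * pib n c) (real j) = 0 \<and> poly (pderiv (G * pib n c)) (real j) = 0"
    by (rule sq_dvd_vanish)
qed

definition Qm :: "nat \<Rightarrow> nat \<Rightarrow> real poly" where
  "Qm n m = (\<Prod>i\<in>{1..m}. [:real i, 1:] * [:real n + real i, -1:])"

definition bet :: "nat \<Rightarrow> nat \<Rightarrow> nat \<Rightarrow> nat \<Rightarrow> real" where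
  "bet n m b k = (-1) ^ k * real (m choose k) * pochhammer (real b + real k + 1) (m - k)
      * pochhammer (real n - real b + 1) (m - k)"

lemma Fm_pib: "[:real i, 1:] * [:real n + real i, -1:] * pib n c
   = smult (real i * (real n + real i) + real c * (real n - real c)) (pib n c) - pib n (Suc c)"
proof -
  have s: "pib n (Suc c) = pib n c * ([:- real c, 1:] * [:real c - real n, 1:])"
    unfolding pib_def by simp
  have "poly ([:real i, 1:] * [:real n + real i, -1:] * pib n c) x
      = poly (smult (real i * (real n + real i) + real c * (real n - real c)) (pib n c) - pib n (Suc c)) x" for x
    unfolding s by (simp add: algebra_simps)
  then have "poly ([:real i, 1:] * [:real n + real i, -1:] * pib n c)
      = poly (smult (real i * (real n + real i) + real c * (real n - real c)) (pib n c) - pib n (Suc c))"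
    by (rule ext)
  then show ?thesis by (rule poly_eq_poly_eq_iff[THEN iffD1])
qed

lemma bet_rec0: "bet n (Suc m) b 0 = bet n m b 0 * ((real m + 1) * (real n + real m + 1) + real b * (real n - real b))"
  unfolding bet_def by (simp add: pochhammer_Suc algebra_simps)

lemma bet_top: "bet n m b (Suc m) = 0"
  unfolding bet_def by simp

lemma bet_recS:
  assumes km: "k \<le> m"
  shows "bet n (Suc m) b (Suc k) = bet n m b (Suc k) * ((real m + 1) * (real n + real m + 1)
           + real (b + Suc k) * (real n - real (b + Suc k))) - bet n m b k"
proof (cases "k = m")
  case True
  then show ?thesis unfolding bet_def by simp
next
  case False
  then have km': "k < m" using km by simp
  define d where "d = m - k - 1"
  have md: "m - k = Suc d" "Suc m - Suc k = Suc d" "m - Suc k = d" unfolding d_def using km' by auto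
  define s where "s = real n - real b"
  define P1 where "P1 = pochhammer (real b + real (Suc k) + 1) d"
  define P2 where "P2 = pochhammer (s + 1) d"
  define c0 where "c0 = real (m choose k)"
  define c1 where "c1 = real (m choose Suc k)"
  have cS: "real (Suc m choose Suc k) = c0 + c1" unfolding c0_def c1_def by simp
  have key: "c1 * (real k + 1) = c0 * (real m - real k)"
  proof -
    have a: "(m - k) * (m choose k) = m * ((m - 1) choose k)" by (rule binomial_absorb_comp)
    have b: "Suc k * (m choose Suc k) = m * ((m - 1) choose k)" by (rule binomial_absorption)
    have "real (Suc k * (m choose Suc k)) = real ((m - k) * (m choose k))" using a b by simp
    then show ?thesis unfolding c0_def c1_def using km by (simp add: of_nat_diff algebra_simps)
  qed
  have p1: "pochhammer (real b + real (Suc k) + 1) (Suc d) = P1 * (real b + real m + 1)"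
    unfolding P1_def pochhammer_Suc d_def using km' by (simp add: of_nat_diff algebra_simps)
  have p2: "pochhammer (s + 1) (Suc d) = P2 * (s + real m - real k)"
    unfolding P2_def pochhammer_Suc d_def using km' by (simp add: of_nat_diff algebra_simps)
  have p3: "pochhammer (real b + real k + 1) (Suc d) = (real b + real k + 1) * P1"
    unfolding P1_def pochhammer_rec by (simp add: algebra_simps)
  have L: "bet n (Suc m) b (Suc k) = - ((-1) ^ k * (c0 + c1) * (P1 * (real b + real m + 1)) * (P2 * (s + real m - real k)))"
    unfolding bet_def md s_def[symmetric] cS[symmetric] p1[symmetric] p2[symmetric] by simp
  have R1: "bet n m b (Suc k) = - ((-1) ^ k * c1 * P1 * P2)"
    unfolding bet_def md s_def[symmetric] c1_def P1_def P2_def by simp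
  have R2: "bet n m b k = (-1) ^ k * c0 * ((real b + real k + 1) * P1) * (P2 * (s + real m - real k))"
    unfolding bet_def md s_def[symmetric] c0_def p3[symmetric] p2[symmetric] by simp
  have nn: "real n = s + real b" unfolding s_def by simp
  have "bet n (Suc m) b (Suc k) - (bet n m b (Suc k) * ((real m + 1) * (real n + real m + 1)
           + real (b + Suc k) * (real n - real (b + Suc k))) - bet n m b k)
        = (-1) ^ k * P1 * P2 * (s + real m - real k) * (c1 * (real k + 1) - c0 * (real m - real k))"
    unfolding L R1 R2 nn by (simp add: algebra_simps)
  also have "\<dots> = 0" using key by simp
  finally show ?thesis by simp
qed



lemma newton: "Qm n m * pib n b = (\<Sum>k\<le>m. smult (bet n m b k) (pib n (b + k)))"
proof (induction m)
  case 0
  have "bet n 0 b 0 = 1" unfolding bet_def by simp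
  then show ?case unfolding Qm_def by simp
next
  case (Suc m)
  define p where "p k = pib n (b + k)" for k
  define \<beta> where "\<beta> k = bet n m b k" for k
  define \<gamma> where "\<gamma> k = (real m + 1) * (real n + real m + 1) + real (b + k) * (real n - real (b + k))" for k
  define Fs where "Fs = [:real (Suc m), 1:] * [:real n + real (Suc m), -1:]"
  have QS: "Qm n (Suc m) = Qm n m * Fs" unfolding Qm_def Fs_def by simp
  have Fp: "Fs * p k = smult (\<gamma> k) (p k) - p (Suc k)" for k
  proof -
    have "Fs * p k = smult (real (Suc m) * (real n + real (Suc m)) + real (b + k) * (real n - real (b + k))) (pib n (b + k)) - pib n (Suc (b + k))"
      unfolding Fs_def p_def by (rule Fm_pib)
    also have "real (Suc m) * (real n + real (Suc m)) + real (b + k) * (real n - real (b + k)) = \<gamma> k"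
      unfolding \<gamma>_def by (simp add: algebra_simps)
    also have "pib n (Suc (b + k)) = p (Suc k)" unfolding p_def by simp
    finally show ?thesis unfolding p_def .
  qed
  have "Qm n (Suc m) * pib n b = Fs * (\<Sum>k\<le>m. smult (\<beta> k) (p k))"
    unfolding QS mult.assoc[symmetric] by (simp add: mult.commute[of _ Fs] mult.assoc Suc.IH \<beta>_def p_def)
  also have "\<dots> = (\<Sum>k\<le>m. smult (\<beta> k) (Fs * p k))"
    by (simp add: sum_distrib_left mult_smult_right)
  also have "\<dots> = (\<Sum>k\<le>m. smult (\<beta> k * \<gamma> k) (p k) - smult (\<beta> k) (p (Suc k)))"
    by (rule sum.cong[OF refl]) (simp add: Fp smult_diff_right)
  also have "\<dots> = (\<Sum>k\<le>m. smult (\<beta> k * \<gamma> k) (p k)) - (\<Sum>k\<le>m. smult (\<beta> k) (p (Suc k)))"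
    by (rule sum_subtractf)
  also have "(\<Sum>k\<le>m. smult (\<beta> k * \<gamma> k) (p k)) = (\<Sum>k\<le>Suc m. smult (\<beta> k * \<gamma> k) (p k))"
    using bet_top[of n m b] by (simp add: \<beta>_def)
  also have "\<dots> = smult (\<beta> 0 * \<gamma> 0) (p 0) + (\<Sum>k\<le>m. smult (\<beta> (Suc k) * \<gamma> (Suc k)) (p (Suc k)))"
    by (rule sum.atMost_Suc_shift)
  finally have A: "Qm n (Suc m) * pib n b = smult (\<beta> 0 * \<gamma> 0) (p 0)
       + (\<Sum>k\<le>m. smult (\<beta> (Suc k) * \<gamma> (Suc k)) (p (Suc k))) - (\<Sum>k\<le>m. smult (\<beta> k) (p (Suc k)))" .
  have "(\<Sum>k\<le>Suc m. smult (bet n (Suc m) b k) (pib n (b + k)))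
      = (\<Sum>k\<le>Suc m. smult (bet n (Suc m) b k) (p k))" unfolding p_def by simp
  also have "\<dots> = smult (bet n (Suc m) b 0) (p 0) + (\<Sum>k\<le>m. smult (bet n (Suc m) b (Suc k)) (p (Suc k)))"
    by (rule sum.atMost_Suc_shift)
  also have "bet n (Suc m) b 0 = \<beta> 0 * \<gamma> 0"
    unfolding bet_rec0 \<beta>_def \<gamma>_def by simp
  also have "(\<Sum>k\<le>m. smult (bet n (Suc m) b (Suc k)) (p (Suc k)))
      = (\<Sum>k\<le>m. smult (\<beta> (Suc k) * \<gamma> (Suc k)) (p (Suc k)) - smult (\<beta> k) (p (Suc k)))"
  proof (rule sum.cong[OF refl])
    fix k assume "k \<in> {..m}"
    then have "k \<le> m" by simp
    then have "bet n (Suc m) b (Suc k) = \<beta> (Suc k) * \<gamma> (Suc k) - \<beta> k"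
      unfolding \<beta>_def \<gamma>_def by (rule bet_recS)
    then show "smult (bet n (Suc m) b (Suc k)) (p (Suc k)) = smult (\<beta> (Suc k) * \<gamma> (Suc k)) (p (Suc k)) - smult (\<beta> k) (p (Suc k))"
      by (simp add: smult_diff_left)
  qed
  also have "\<dots> = (\<Sum>k\<le>m. smult (\<beta> (Suc k) * \<gamma> (Suc k)) (p (Suc k))) - (\<Sum>k\<le>m. smult (\<beta> k) (p (Suc k)))"
    by (rule sum_subtractf)
  finally show ?case unfolding A by (simp add: algebra_simps)
qed



definition Qpp :: "nat \<Rightarrow> real poly" where
  "Qpp n = smult (1 / (fact n)^2) (Qm n n)"

definition gam :: "nat \<Rightarrow> nat \<Rightarrow> real" where
  "gam n b = (-1) ^ (n + b) * fact (n - b) / (2 * fact (n + b))"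

definition Zf :: "nat \<Rightarrow> nat \<Rightarrow> nat \<Rightarrow> real" where
  "Zf n M b = gam n b * Lf n (lin2 n * pib n b * Qpp n ^ M)"

lemma poch_fact0: "fact a * pochhammer (real a + 1) k = (fact (a + k) :: real)"
proof (induction k)
  case 0
  then show ?case by simp
next
  case (Suc k)
  have "fact a * pochhammer (real a + 1) (Suc k) = (fact a * pochhammer (real a + 1) k) * (real a + 1 + real k)"
    by (simp add: pochhammer_Suc mult.assoc)
  also have "\<dots> = fact (a + k) * (real a + 1 + real k)" by (simp only: Suc.IH)
  also have "\<dots> = fact (a + Suc k)" by (simp add: algebra_simps)
  finally show ?case .
qed

lemma poch_fact: "pochhammer (real a + 1) k = fact (a + k) / fact a"
  using poch_fact0[of a k] by (simp add: field_simps)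

lemma sg_lemma: "b \<le> c \<Longrightarrow> (-1::real) ^ (n + b) * (-1) ^ (c - b) = (-1) ^ (n + c)"
proof -
  assume bc: "b \<le> c"
  have "n + b + (c - b) = n + c" using bc by simp
  then show ?thesis using power_add[of "-1::real" "n + b" "c - b"] by simp
qed

lemma absL: "(x::real) \<noteq> 0 \<Longrightarrow> B \<noteq> 0 \<Longrightarrow> N \<noteq> 0 \<Longrightarrow> F \<noteq> 0 \<Longrightarrow>
  (s1 * x / (2 * B)) * (1 / N^2) * (s2 * C * (B / F) * (G / x)) = (s1 * s2) * C * G / (2 * N^2 * F)"
  by (simp add: field_simps)

lemma absR: "(P::real) \<noteq> 0 \<Longrightarrow> Y \<noteq> 0 \<Longrightarrow> N \<noteq> 0 \<Longrightarrow> F \<noteq> 0 \<Longrightarrow>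
  C * ((P / (N * F)) * (G / (N * Y))) * (s * Y / (2 * P)) = s * C * G / (2 * N^2 * F)"
  by (simp add: field_simps power2_eq_square)

lemma coef_id:
  assumes bc: "b \<le> c" and cn: "c \<le> n"
  shows "gam n b * (1 / (fact n)^2) * bet n n b (c - b) = real (n choose (c - b)) * Qr n c * gam n c"
proof -
  have p1: "pochhammer (real b + real (c - b) + 1) (n - (c - b)) = fact (n + b) / fact c"
  proof -
    have e1: "real b + real (c - b) = real c" using bc by simp
    have e2: "c + (n - (c - b)) = n + b" using bc cn by simp
    show ?thesis unfolding e1 poch_fact e2 by simp
  qed
  have p2: "pochhammer (real n - real b + 1) (n - (c - b)) = fact (2*n - c) / fact (n - b)"
  proof -
    have e1: "real n - real b = real (n - b)" using bc cn by simp
    have e2: "(n - b) + (n - (c - b)) = 2*n - c" using bc cn by simp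
    show ?thesis unfolding e1 poch_fact e2 by simp
  qed
  have L: "gam n b * (1 / (fact n)^2) * bet n n b (c - b)
     = ((-1) ^ (n + b) * (-1) ^ (c - b)) * real (n choose (c - b)) * fact (2*n - c) / (2 * (fact n)^2 * fact c)"
    unfolding gam_def bet_def p1 p2 by (rule absL) auto
  have q1: "real ((n + c) choose n) = fact (n + c) / (fact n * fact c)"
    using binomial_fact[of n "n + c"] by simp
  have q2: "real ((2*n - c) choose n) = fact (2*n - c) / (fact n * fact (n - c))"
  proof -
    have le: "n \<le> 2*n - c" using cn by simp
    have "2*n - c - n = n - c" by simp
    then show ?thesis using binomial_fact[OF le] by simp
  qed
  have R: "real (n choose (c - b)) * Qr n c * gam n c
     = (-1) ^ (n + c) * real (n choose (c - b)) * fact (2*n - c) / (2 * (fact n)^2 * fact c)"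
    unfolding Qr_def gam_def q1 q2 by (rule absR) auto
  show ?thesis unfolding L R sg_lemma[OF bc] ..
qed



lemma Zf_step:
  assumes bn: "b \<le> n"
  shows "Zf n (Suc M) b = (\<Sum>c=b..n. real (n choose (c - b)) * Qr n c * Zf n M c)"
proof -
  define G where "G = lin2 n * Qpp n ^ M"
  have e1: "lin2 n * pib n b * Qpp n ^ Suc M = G * (Qpp n * pib n b)"
    unfolding G_def by (simp only: power_Suc mult_ac)
  have e2: "Qpp n * pib n b = smult (1 / (fact n)^2) (\<Sum>k\<le>n. smult (bet n n b k) (pib n (b + k)))"
    unfolding Qpp_def mult_smult_left newton ..
  have e3: "G * (Qpp n * pib n b) = smult (1 / (fact n)^2) (\<Sum>k\<le>n. smult (bet n n b k) (G * pib n (b + k)))"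
    unfolding e2 mult_smult_right sum_distrib_left by simp
  have "Lf n (lin2 n * pib n b * Qpp n ^ Suc M) = (1 / (fact n)^2) * (\<Sum>k\<le>n. bet n n b k * Lf n (G * pib n (b + k)))"
    unfolding e1 e3 Lf_smult Lf_sum ..
  also have "(\<Sum>k\<le>n. bet n n b k * Lf n (G * pib n (b + k))) = (\<Sum>k=0..n-b. bet n n b k * Lf n (G * pib n (b + k)))"
  proof (rule sum.mono_neutral_right)
    show "finite {..n}" by simp
    show "{0..n - b} \<subseteq> {..n}" by auto
    show "\<forall>k\<in>{..n} - {0..n - b}. bet n n b k * Lf n (G * pib n (b + k)) = 0"
    proof
      fix k assume "k \<in> {..n} - {0..n - b}"
      then have "n < b + k" by auto
      then show "bet n n b k * Lf n (G * pib n (b + k)) = 0" by (simp add: Lf_pib_zero)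
    qed
  qed
  also have "\<dots> = (\<Sum>c=b..n. bet n n b (c - b) * Lf n (G * pib n c))"
    using sum.shift_bounds_cl_nat_ivl[of "\<lambda>c. bet n n b (c - b) * Lf n (G * pib n c)" 0 b "n - b"] bn
    by (simp add: add.commute)
  finally have A: "Lf n (lin2 n * pib n b * Qpp n ^ Suc M) = (1 / (fact n)^2) * (\<Sum>c=b..n. bet n n b (c - b) * Lf n (G * pib n c))" .
  have "Zf n (Suc M) b = (\<Sum>c=b..n. (gam n b * (1 / (fact n)^2) * bet n n b (c - b)) * Lf n (G * pib n c))"
    unfolding Zf_def A by (simp add: sum_distrib_left mult.assoc)
  also have "\<dots> = (\<Sum>c=b..n. real (n choose (c - b)) * Qr n c * Zf n M c)"
  proof (rule sum.cong[OF refl])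
    fix c assume "c \<in> {b..n}"
    then have bc: "b \<le> c" and cn: "c \<le> n" by auto
    have gp: "G * pib n c = lin2 n * pib n c * Qpp n ^ M" unfolding G_def by (simp only: mult_ac)
    show "(gam n b * (1 / (fact n)^2) * bet n n b (c - b)) * Lf n (G * pib n c) = real (n choose (c - b)) * Qr n c * Zf n M c"
      unfolding coef_id[OF bc cn] Zf_def gp by (simp only: mult.assoc)
  qed
  finally show ?thesis .
qed

lemma Zf_base:
  assumes bn: "b \<le> n"
  shows "Zf n 0 b = (-1) ^ (n + b) * fact b * fact n / fact (n + b)"
proof -
  have pr: "(\<Prod>i<b. (real n - real i)) = fact n / fact (n - b)"
  proof -
    have "fact (n - b) * (\<Prod>i<b. (real n - real i)) = fact n" using bn
    proof (induction b)
      case 0 then show ?case by simp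
    next
      case (Suc b)
      then have bn': "b \<le> n" and bl: "b < n" by auto
      have f: "fact (n - b) = (real n - real b) * fact (n - Suc b)"
      proof -
        have "n - b = Suc (n - Suc b)" using bl by simp
        then have "fact (n - b) = (fact (Suc (n - Suc b)) :: real)" by simp
        also have "\<dots> = real (Suc (n - Suc b)) * fact (n - Suc b)" by (rule fact_Suc)
        also have "real (Suc (n - Suc b)) = real n - real b" using bl by (simp add: of_nat_diff)
        finally show ?thesis .
      qed
      have "fact (n - Suc b) * (\<Prod>i<Suc b. (real n - real i)) = (fact (n - Suc b) * (real n - real b)) * (\<Prod>i<b. (real n - real i))"
        by (simp add: mult_ac)
      also have "fact (n - Suc b) * (real n - real b) = fact (n - b)" using f by simp
      finally show ?case using Suc.IH[OF bn'] by simp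
    qed
    then show ?thesis by (simp add: field_simps)
  qed
  have "Zf n 0 b = gam n b * (2 * fact b * (\<Prod>i<b. (real n - real i)))"
    unfolding Zf_def by (simp add: lambda_val)
  also have "\<dots> = (-1) ^ (n + b) * fact b * fact n / fact (n + b)"
    unfolding pr gam_def by (simp add: field_simps)
  finally show ?thesis .
qed



lemma Zf1:
  assumes bn: "b \<le> n"
  shows "Zf n (Suc 0) b = (-1) ^ (n + b)"
proof -
  have "Zf n (Suc 0) b = (\<Sum>c=b..n. real (n choose (c - b)) * Qr n c * Zf n 0 c)"
    using Zf_step[OF bn, of 0] by simp
  also have "\<dots> = (\<Sum>c=b..n. real (n choose (c - b)) * ((-1) ^ (n + c) * real ((2*n - c) choose n)))"
  proof (rule sum.cong[OF refl])
    fix c assume "c \<in> {b..n}"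
    then have cn: "c \<le> n" by simp
    have q1: "real ((n + c) choose n) = fact (n + c) / (fact n * fact c)"
      using binomial_fact[of n "n + c"] by simp
    have "Qr n c * Zf n 0 c = (-1) ^ (n + c) * real ((2*n - c) choose n)"
      unfolding Zf_base[OF cn] Qr_def q1 by (simp add: field_simps)
    then show "real (n choose (c - b)) * Qr n c * Zf n 0 c = real (n choose (c - b)) * ((-1) ^ (n + c) * real ((2*n - c) choose n))"
      by (simp add: mult.assoc)
  qed
  also have "\<dots> = (-1) ^ (n + b)" by (rule L3core[OF bn])
  finally show ?thesis .
qed

lemma Zf2:
  assumes bn: "b \<le> n"
  shows "Zf n 2 b = Kr n b"
proof -
  have "Zf n 2 b = (\<Sum>c=b..n. real (n choose (c - b)) * Qr n c * Zf n 1 c)"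
    using Zf_step[OF bn, of 1] by (simp add: numeral_2_eq_2)
  also have "\<dots> = (\<Sum>c=b..n. real (n choose (c - b)) * Qr n c * (-1) ^ (n + c))"
    by (rule sum.cong[OF refl]) (simp add: Zf1)
  also have "\<dots> = Kr n b" by (rule L4[OF bn])
  finally show ?thesis .
qed



lemma poly_Qm: "poly (Qm n m) x = pochhammer (x + 1) m * pochhammer (real n - x + 1) m"
proof (induction m)
  case 0 then show ?case by (simp add: Qm_def)
next
  case (Suc m)
  have "Qm n (Suc m) = Qm n m * ([:real (Suc m), 1:] * [:real n + real (Suc m), -1:])"
    unfolding Qm_def by simp
  then have "poly (Qm n (Suc m)) x = poly (Qm n m) x * ((x + real m + 1) * (real n + real m + 1 - x))"
    by (simp add: algebra_simps)
  then show ?case unfolding Suc.IH by (simp add: pochhammer_Suc algebra_simps)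
qed

lemma dQm:
  assumes x0: "0 \<le> x" and xn: "x \<le> real n"
  shows "poly (pderiv (Qm n m)) x = poly (Qm n m) x * (\<Sum>i\<in>{1..m}. (1 / (x + real i) - 1 / (real n + real i - x)))"
proof (induction m)
  case 0 then show ?case by (simp add: Qm_def)
next
  case (Suc m)
  define F where "F = [:real (Suc m), 1:] * [:real n + real (Suc m), -1:]"
  have QS: "Qm n (Suc m) = Qm n m * F" unfolding Qm_def F_def by simp
  have Fv: "poly F x = (x + real m + 1) * (real n + real m + 1 - x)" unfolding F_def by (simp add: algebra_simps)
  have dFv: "poly (pderiv F) x = (real n + real m + 1 - x) - (x + real m + 1)"
    unfolding F_def by (simp add: pderiv_mult pderiv_pCons algebra_simps)
  have a1: "x + real m + 1 \<noteq> 0" using x0 by simp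
  have a2: "real n + real m + 1 - x \<noteq> 0" using xn by simp
  have absF: "c - a = (a * c) * (1 / a - 1 / c)" if "a \<noteq> 0" "c \<noteq> 0" for a c :: real
    using that by (simp add: field_simps)
  have e1: "x + real (Suc m) = x + real m + 1" by simp
  have e2: "real n + real (Suc m) - x = real n + real m + 1 - x" by simp
  have fr: "poly (pderiv F) x = poly F x * (1 / (x + real (Suc m)) - 1 / (real n + real (Suc m) - x))"
    unfolding Fv dFv e1 e2 by (rule absF[OF a1 a2])
  have "poly (pderiv (Qm n (Suc m))) x = poly (Qm n m) x * poly (pderiv F) x + poly F x * poly (pderiv (Qm n m)) x"
    unfolding QS pderiv_mult by simp
  also have "\<dots> = poly (Qm n (Suc m)) x * ((\<Sum>i\<in>{1..m}. (1 / (x + real i) - 1 / (real n + real i - x)))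
       + (1 / (x + real (Suc m)) - 1 / (real n + real (Suc m) - x)))"
    unfolding fr Suc.IH QS by (simp add: algebra_simps)
  also have "(\<Sum>i\<in>{1..m}. (1 / (x + real i) - 1 / (real n + real i - x)))
       + (1 / (x + real (Suc m)) - 1 / (real n + real (Suc m) - x))
       = (\<Sum>i\<in>{1..Suc m}. (1 / (x + real i) - 1 / (real n + real i - x)))"
    by simp
  finally show ?case .
qed

lemma harm_sum: "(\<Sum>i\<in>{1..m}. 1 / (real a + real i)) = harm (a + m) - harm a"
proof (induction m)
  case 0 then show ?case by simp
next
  case (Suc m)
  have "(\<Sum>i\<in>{1..Suc m}. 1 / (real a + real i)) = (\<Sum>i\<in>{1..m}. 1 / (real a + real i)) + 1 / (real a + real (Suc m))"
    by simp
  also have "\<dots> = harm (a + m) - harm a + 1 / (real a + real (Suc m))" unfolding Suc.IH ..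
  also have "harm (a + Suc m) = harm (a + m) + (1 / (real a + real (Suc m)) :: real)"
    by (simp add: harm_Suc divide_inverse add_ac)
  ultimately show ?case by simp
qed

lemma absQ: "(N::real) \<noteq> 0 \<Longrightarrow> F \<noteq> 0 \<Longrightarrow> Y \<noteq> 0 \<Longrightarrow>
  1 / N^2 * ((P / F) * (G / Y)) = (P / (N * F)) * (G / (N * Y))"
  by (simp add: field_simps power2_eq_square)

lemma poly_Qpp:
  assumes jn: "j \<le> n"
  shows "poly (Qpp n) (real j) = Qr n j"
proof -
  have p1: "pochhammer (real j + 1) n = fact (n + j) / fact j"
    using poch_fact[of j n] by (simp add: add.commute)
  have p2: "pochhammer (real n - real j + 1) n = fact (2*n - j) / fact (n - j)"
  proof -
    have e1: "real n - real j = real (n - j)" using jn by simp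
    have e2: "n - j + n = 2*n - j" using jn by simp
    show ?thesis unfolding e1 poch_fact e2 ..
  qed
  have q1: "real ((n + j) choose n) = fact (n + j) / (fact n * fact j)"
    using binomial_fact[of n "n + j"] by simp
  have q2: "real ((2*n - j) choose n) = fact (2*n - j) / (fact n * fact (n - j))"
  proof -
    have le: "n \<le> 2*n - j" using jn by simp
    have "2*n - j - n = n - j" by simp
    then show ?thesis using binomial_fact[OF le] by simp
  qed
  show ?thesis unfolding Qpp_def poly_smult poly_Qm p1 p2 Qr_def q1 q2 by (rule absQ) auto
qed

lemma dQpp:
  assumes jn: "j \<le> n"
  shows "poly (pderiv (Qpp n)) (real j) = Qr n j * ((harm (n + j) - harm j) + (harm (n - j) - harm (2*n - j)))"
proof -
  have s1: "(\<Sum>i\<in>{1..n}. 1 / (real j + real i)) = harm (j + n) - harm j" by (rule harm_sum)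
  have s2: "(\<Sum>i\<in>{1..n}. 1 / (real n + real i - real j)) = harm (2*n - j) - harm (n - j)"
  proof -
    have "(\<Sum>i\<in>{1..n}. 1 / (real n + real i - real j)) = (\<Sum>i\<in>{1..n}. 1 / (real (n - j) + real i))"
      using jn by (intro sum.cong) (auto simp: of_nat_diff)
    also have "\<dots> = harm (n - j + n) - harm (n - j)" by (rule harm_sum)
    also have "n - j + n = 2*n - j" using jn by simp
    finally show ?thesis .
  qed
  have "poly (pderiv (Qpp n)) (real j) = 1 / (fact n)^2 * poly (pderiv (Qm n n)) (real j)"
    unfolding Qpp_def pderiv_smult by simp
  also have "\<dots> = 1 / (fact n)^2 * poly (Qm n n) (real j) * (\<Sum>i\<in>{1..n}. (1 / (real j + real i) - 1 / (real n + real i - real j)))"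
    using dQm[of "real j" n n] jn by simp
  also have "1 / (fact n)^2 * poly (Qm n n) (real j) = Qr n j"
    using poly_Qpp[OF jn] unfolding Qpp_def by simp
  also have "(\<Sum>i\<in>{1..n}. (1 / (real j + real i) - 1 / (real n + real i - real j)))
      = (harm (n + j) - harm j) + (harm (n - j) - harm (2*n - j))"
    unfolding sum_subtractf s1 s2 by (simp add: add.commute)
  finally show ?thesis .
qed



lemma Zf_final:
  assumes B1: "1 \<le> B"
  shows "Zf n B 0 = (-1) ^ (n + 1) * bigP n B"
proof -
  have pib0: "pib n 0 = 1" unfolding pib_def by simp
  have g0: "gam n 0 = (-1) ^ n / 2" unfolding gam_def by simp
  have termeq: "real (n choose j) * (poly (pderiv (lin2 n * Qpp n ^ B)) (real j) + (harm (n - j) - harm j) * poly (lin2 n * Qpp n ^ B) (real j))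
     = -2 * (real (n choose j) * real ((n + j) choose n) ^ B * real ((2*n - j) choose n) ^ B
        * ((real n / 2 - real j) * ((1 + real B) * (harm (n - j) - harm j)
            + real B * (harm (n + j) - harm (2*n - j))) - 1))"
    if jn: "j \<le> n" for j
  proof -
    define Q where "Q = Qr n j"
    define D where "D = (harm (n + j) - harm j) + (harm (n - j) - harm (2*n - j) :: real)"
    have pd: "pderiv (lin2 n * Qpp n ^ B) = lin2 n * smult (real B) (Qpp n ^ (B - 1) * pderiv (Qpp n)) + Qpp n ^ B * [:2:]"
      unfolding pderiv_mult pderiv_power lin2_def by (simp add: pderiv_pCons)
    have QB: "Q ^ (B - 1) * Q = Q ^ B" using B1 by (cases B) simp_all
    have v1: "poly (pderiv (lin2 n * Qpp n ^ B)) (real j) = (2 * real j - real n) * (real B * Q ^ B * D) + Q ^ B * 2"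
    proof -
      have "poly (pderiv (lin2 n * Qpp n ^ B)) (real j) = poly (lin2 n) (real j) * (real B * (poly (Qpp n) (real j) ^ (B - 1) * poly (pderiv (Qpp n)) (real j))) + poly (Qpp n) (real j) ^ B * poly [:2:] (real j)"
        unfolding pd poly_add poly_mult poly_smult poly_power ..
      also have "\<dots> = (2 * real j - real n) * (real B * (Q ^ (B - 1) * (Q * D))) + Q ^ B * 2"
        unfolding poly_Qpp[OF jn] dQpp[OF jn] Q_def[symmetric] D_def[symmetric] lin2_def by simp
      also have "Q ^ (B - 1) * (Q * D) = Q ^ B * D" using QB by (simp add: mult.assoc[symmetric])
      finally show ?thesis by (simp add: mult.assoc)
    qed
    have v2: "poly (lin2 n * Qpp n ^ B) (real j) = (2 * real j - real n) * Q ^ B"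
      using poly_Qpp[OF jn] unfolding Q_def lin2_def by (simp add: algebra_simps)
    have QQ: "real ((n + j) choose n) ^ B * real ((2*n - j) choose n) ^ B = Q ^ B"
      unfolding Q_def Qr_def by (simp add: power_mult_distrib)
    have absT: "C * ((2 * jj - nn) * (BB * P * DD) + P * 2 + hh * ((2 * jj - nn) * P))
        = -2 * (C * P * ((nn / 2 - jj) * ((1 + BB) * hh + BB * EE) - 1))"
      if "DD = EE + hh" for C jj nn BB P DD hh EE :: real
      unfolding that by (simp add: algebra_simps)
    have DE: "D = (harm (n + j) - harm (2*n - j)) + (harm (n - j) - harm j)" unfolding D_def by simp
    have "real (n choose j) * (poly (pderiv (lin2 n * Qpp n ^ B)) (real j) + (harm (n - j) - harm j) * poly (lin2 n * Qpp n ^ B) (real j))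
       = real (n choose j) * ((2 * real j - real n) * (real B * Q ^ B * D) + Q ^ B * 2 + (harm (n - j) - harm j) * ((2 * real j - real n) * Q ^ B))"
      unfolding v1 v2 ..
    also have "\<dots> = -2 * (real (n choose j) * Q ^ B * ((real n / 2 - real j) * ((1 + real B) * (harm (n - j) - harm j)
            + real B * (harm (n + j) - harm (2*n - j))) - 1))"
      by (rule absT[OF DE])
    also have "real (n choose j) * Q ^ B = real (n choose j) * real ((n + j) choose n) ^ B * real ((2*n - j) choose n) ^ B"
      unfolding QQ[symmetric] by (simp only: mult.assoc)
    finally show ?thesis .
  qed
  have "Zf n B 0 = (-1) ^ n / 2 * Lf n (lin2 n * Qpp n ^ B)"
    unfolding Zf_def pib0 g0 by simp
  also have "Lf n (lin2 n * Qpp n ^ B) = (\<Sum>j\<le>n. -2 * (real (n choose j) * real ((n + j) choose n) ^ B * real ((2*n - j) choose n) ^ B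
        * ((real n / 2 - real j) * ((1 + real B) * (harm (n - j) - harm j)
            + real B * (harm (n + j) - harm (2*n - j))) - 1)))"
    unfolding Lf_def
  proof (rule sum.cong[OF refl])
    fix j assume "j \<in> {..n}"
    then have "j \<le> n" by simp
    then show "real (n choose j) * (poly (pderiv (lin2 n * Qpp n ^ B)) (real j) + (harm (n - j) - harm j) * poly (lin2 n * Qpp n ^ B) (real j))
     = -2 * (real (n choose j) * real ((n + j) choose n) ^ B * real ((2*n - j) choose n) ^ B
        * ((real n / 2 - real j) * ((1 + real B) * (harm (n - j) - harm j)
            + real B * (harm (n + j) - harm (2*n - j))) - 1))"
      by (rule termeq)
  qed
  also have "\<dots> = -2 * bigP n B"
    unfolding bigP_def sum_distrib_left[symmetric] by (simp add: atLeast0AtMost)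
  finally show ?thesis by (simp add: power_add)
qed



definition tup :: "nat \<Rightarrow> nat \<Rightarrow> (nat \<Rightarrow> nat) set" where
  "tup n m = {i. i 0 = 0 \<and> (\<forall>k\<in>{1..m}. i (k - 1) \<le> i k) \<and> i m \<le> n \<and> (\<forall>k>m. i k = 0)}"

lemma tup0: "tup n 0 = {\<lambda>_. 0}"
proof
  show "tup n 0 \<subseteq> {\<lambda>_. 0}"
  proof
    fix i assume "i \<in> tup n 0"
    then have "i k = 0" for k unfolding tup_def by (cases k) auto
    then show "i \<in> {\<lambda>_. 0}" by auto
  qed
  show "{\<lambda>_. 0} \<subseteq> tup n 0" unfolding tup_def by auto
qed

lemma tup_upd_in:
  assumes "i \<in> tup n m" "i m \<le> a" "a \<le> n"
  shows "i(Suc m := a) \<in> tup n (Suc m)"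
  using assms unfolding tup_def
  by (auto simp: le_Suc_eq)

lemma tup_res_in:
  assumes "i \<in> tup n (Suc m)"
  shows "i(Suc m := 0) \<in> tup n m" "i m \<le> i (Suc m)" "i (Suc m) \<le> n"
proof -
  have A: "i 0 = 0" "\<forall>k\<in>{1..Suc m}. i (k - 1) \<le> i k" "i (Suc m) \<le> n" "\<forall>k>Suc m. i k = 0"
    using assms unfolding tup_def by auto
  show m1: "i m \<le> i (Suc m)" using bspec[OF A(2), of "Suc m"] by simp
  show "i (Suc m) \<le> n" by (rule A(3))
  show "i(Suc m := 0) \<in> tup n m"
    unfolding tup_def using A m1 by auto
qed

lemma tup_upd_0: "i \<in> tup n m \<Longrightarrow> i(Suc m := 0) = i"
  unfolding tup_def by auto

lemma finite_tup: "finite (tup n m)"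
proof (induction m)
  case 0 then show ?case by (simp add: tup0)
next
  case (Suc m)
  have "tup n (Suc m) \<subseteq> (\<lambda>(i, a). i(Suc m := a)) ` (SIGMA i:tup n m. {i m..n})"
  proof
    fix i assume i: "i \<in> tup n (Suc m)"
    have "(i(Suc m := 0), i (Suc m)) \<in> (SIGMA i:tup n m. {i m..n})"
      using tup_res_in[OF i] by auto
    moreover have "i = (\<lambda>(i, a). i(Suc m := a)) (i(Suc m := 0), i (Suc m))" by simp
    ultimately show "i \<in> (\<lambda>(i, a). i(Suc m := a)) ` (SIGMA i:tup n m. {i m..n})" by blast
  qed
  moreover have "finite (SIGMA i:tup n m. {i m..n})" using Suc.IH by auto
  ultimately show ?case by (meson finite_imageI finite_subset)
qed

lemma tup_split:
  "(\<Sum>i\<in>tup n (Suc m). g i) = (\<Sum>i\<in>tup n m. \<Sum>a=i m..n. (g (i(Suc m := a)) :: real))"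
proof -
  have "(\<Sum>i\<in>tup n m. \<Sum>a=i m..n. g (i(Suc m := a))) = (\<Sum>(i, a)\<in>(SIGMA i:tup n m. {i m..n}). g (i(Suc m := a)))"
    by (rule sum.Sigma) (auto simp: finite_tup)
  also have "\<dots> = (\<Sum>i\<in>tup n (Suc m). g i)"
  proof (rule sum.reindex_bij_witness[where j = "\<lambda>(i, a). i(Suc m := a)" and i = "\<lambda>i. (i(Suc m := 0), i (Suc m))"])
    fix x assume x: "x \<in> (SIGMA i:tup n m. {i m..n})"
    obtain i a where ia: "x = (i, a)" "i \<in> tup n m" "i m \<le> a" "a \<le> n" using x by auto
    show "(\<lambda>i. (i(Suc m := 0), i (Suc m))) ((\<lambda>(i, a). i(Suc m := a)) x) = x"
      using ia tup_upd_0[OF ia(2)] by auto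
    show "(\<lambda>(i, a). i(Suc m := a)) x \<in> tup n (Suc m)"
      using ia tup_upd_in[OF ia(2-4)] by auto
    show "g ((\<lambda>(i, a). i(Suc m := a)) x) = (case x of (i, a) \<Rightarrow> g (i(Suc m := a)))"
      by (simp add: ia)
  next
    fix i assume i: "i \<in> tup n (Suc m)"
    show "(\<lambda>(i, a). i(Suc m := a)) ((\<lambda>i. (i(Suc m := 0), i (Suc m))) i) = i" by simp
    show "(\<lambda>i. (i(Suc m := 0), i (Suc m))) i \<in> (SIGMA i:tup n m. {i m..n})"
      using tup_res_in[OF i] by auto
  qed
  finally show ?thesis by simp
qed



definition W :: "nat \<Rightarrow> (nat \<Rightarrow> nat) \<Rightarrow> nat \<Rightarrow> real" where
  "W n i m = (\<Prod>k\<in>{1..m}. real (n choose (i k - i (k - 1))) * Qr n (i k))"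

lemma W_upd: "W n (i(Suc m := a)) (Suc m) = W n i m * (real (n choose (a - i m)) * Qr n a)"
proof -
  have "W n (i(Suc m := a)) (Suc m) = (\<Prod>k\<in>{1..m}. real (n choose ((i(Suc m := a)) k - (i(Suc m := a)) (k - 1))) * Qr n ((i(Suc m := a)) k))
      * (real (n choose (a - i m)) * Qr n a)"
    unfolding W_def by simp
  also have "(\<Prod>k\<in>{1..m}. real (n choose ((i(Suc m := a)) k - (i(Suc m := a)) (k - 1))) * Qr n ((i(Suc m := a)) k)) = W n i m"
    unfolding W_def by (rule prod.cong) auto
  finally show ?thesis .
qed

lemma chain: "(\<Sum>i\<in>tup n m. W n i m * Zf n j (i m)) = Zf n (j + m) 0"
proof (induction m arbitrary: j)
  case 0
  show ?case by (simp add: tup0 W_def)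
next
  case (Suc m)
  have "(\<Sum>i\<in>tup n (Suc m). W n i (Suc m) * Zf n j (i (Suc m)))
      = (\<Sum>i\<in>tup n m. \<Sum>a=i m..n. W n (i(Suc m := a)) (Suc m) * Zf n j a)"
    by (simp add: tup_split)
  also have "\<dots> = (\<Sum>i\<in>tup n m. W n i m * Zf n (Suc j) (i m))"
  proof (rule sum.cong[OF refl])
    fix i assume i: "i \<in> tup n m"
    then have imn: "i m \<le> n" unfolding tup_def by simp
    have "(\<Sum>a=i m..n. W n (i(Suc m := a)) (Suc m) * Zf n j a)
        = W n i m * (\<Sum>a=i m..n. real (n choose (a - i m)) * Qr n a * Zf n j a)"
      unfolding W_upd sum_distrib_left by (simp add: mult.assoc)
    also have "\<dots> = W n i m * Zf n (Suc j) (i m)" unfolding Zf_step[OF imn] ..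
    finally show "(\<Sum>a=i m..n. W n (i(Suc m := a)) (Suc m) * Zf n j a) = W n i m * Zf n (Suc j) (i m)" .
  qed
  also have "\<dots> = Zf n (Suc j + m) 0" by (rule Suc.IH)
  finally show ?case by simp
qed

theorem proposition4:
  fixes n B :: nat
  assumes "B \<ge> 2"
  shows "bigP n B = (-1) ^ (n + 1) * real_of_int (smallp n B)"
proof -
  obtain m where mB: "B = Suc (Suc m)" using assms by (metis add_2_eq_Suc le_Suc_ex)
  have idx: "idx_tuples n (Suc (Suc m)) = tup n (Suc m)"
    unfolding idx_tuples_def tup_def by (auto simp: Suc_le_eq)
  define f where "f i = (-1) ^ (i (Suc m) + i m) * real ((3*n + 1) choose (n - i (Suc m)))
      * real ((n + i (Suc m) - i m) choose n) * real ((n + i (Suc m)) choose n)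
      * (\<Prod>k = 1..m. real (n choose (i k - i (k - 1))) * real ((2*n - i k) choose n) * real ((n + i k) choose n))" for i
  have "real_of_int (smallp n B) = (\<Sum>i\<in>tup n (Suc m). f i)"
    unfolding smallp_def f_def mB idx by (simp add: of_int_sum of_int_prod)
  also have "\<dots> = (\<Sum>i\<in>tup n m. \<Sum>a=i m..n. f (i(Suc m := a)))" by (rule tup_split)
  also have "\<dots> = (\<Sum>i\<in>tup n m. W n i m * Zf n 2 (i m))"
  proof (rule sum.cong[OF refl])
    fix i assume i: "i \<in> tup n m"
    then have imn: "i m \<le> n" unfolding tup_def by simp
    have pw: "(\<Prod>k = 1..m. real (n choose ((i(Suc m := a)) k - (i(Suc m := a)) (k - 1))) * real ((2*n - (i(Suc m := a)) k) choose n) * real ((n + (i(Suc m := a)) k) choose n))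
        = W n i m" for a
      unfolding W_def Qr_def by (rule prod.cong) auto
    have fa: "f (i(Suc m := a)) = W n i m * ((-1) ^ (a + i m) * real ((3*n + 1) choose (n - a))
      * real ((n + a - i m) choose n) * real ((n + a) choose n))" for a
      unfolding f_def pw by simp
    have "(\<Sum>a=i m..n. f (i(Suc m := a))) = W n i m * Kr n (i m)"
      unfolding fa Kr_def sum_distrib_left by (rule sum.cong) (auto simp: add.commute)
    also have "\<dots> = W n i m * Zf n 2 (i m)" using Zf2[OF imn] by simp
    finally show "(\<Sum>a=i m..n. f (i(Suc m := a))) = W n i m * Zf n 2 (i m)" .
  qed
  also have "\<dots> = Zf n (2 + m) 0" by (rule chain)
  also have "\<dots> = (-1) ^ (n + 1) * bigP n B" using Zf_final[of "2 + m" n] mB by simp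
  finally have "real_of_int (smallp n B) = (-1) ^ (n + 1) * bigP n B" .
  then have "(-1) ^ (n + 1) * real_of_int (smallp n B) = ((-1) ^ (n + 1) * (-1) ^ (n + 1)) * bigP n B" by simp
  also have "((-1::real) ^ (n + 1) * (-1) ^ (n + 1)) = 1" by (simp add: power_mult_distrib[symmetric])
  finally show ?thesis by simp
qed

end
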